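(* Let $\mathcal{X}$ and $\mathcal{Y}$ be mm-spaces and $p\geq1$. Then $$d_{\mathrm{GW},p}(\mathcal{X},\mathcal{Y})=\inf_{\mathcal{Z}}d_{\mathrm{GM},p}(\mathcal{Z},\mathcal{Y}),$$ where the infimum is taken over all mass splittings $\mathcal{Z}$ of $\mathcal{X}$.
   Context: A metric measure space (mm-space) is a triple $\mathcal{X}=(X,d_X,\mu_X)$ with $(X,d_X)$ a compact metric space and $\mu_X$ a Borel probability measure of full support. A pseudo-metric measure space (pmm-space) is a triple $\mathcal{Z}=(Z,d_Z,\mu_Z)$ where $d_Z$ satisfies all metric axioms except that $d_Z(z,z')=0$ is allowed for $z\neq z'$, $(Z,d_Z)$ is compact in the topology generated by open balls, and $\mu_Z$ is a Borel probability measure of full support. A mass splitting of an mm-space $\mathcal{X}$ is a pmm-space $\mathcal{Z}$ for which there is a measurable map $\pi:Z\to X$ with $\pi_\#\mu_Z=\mu_X$ and $d_Z(z,z')=d_X(\pi(z),\pi(z'))$ for all $z,z'\in Z$. For (p)mm-spaces, $\mathcal{T}(\mu_Z,\mu_Y)$ is the set of measurable $\phi:Z\to Y$ with $\phi_\#\mu_Z=\mu_Y$, and $$d_{\mathrm{GM},p}(\mathcal{Z},\mathcal{Y})=\inf_{\phi\in\mathcal{T}(\mu_Z,\mu_Y)}\left(\iint_{Z\times Z}|d_Z(z,z')-d_Y(\phi(z),\phi(z'))|^p\,\mu_Z(dz)\mu_Z(dz')\right)^{1/p}$$ ($=\infty$ if no such $\phi$ exists). With $\mathcal{U}(\mu_X,\mu_Y)$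 the set of Borel probability measures on $X\times Y$ with marginals $\mu_X,\mu_Y$ (couplings), the Gromov–Wasserstein $p$-distance is $$d_{\mathrm{GW},p}(\mathcal{X},\mathcal{Y})=\inf_{\mu\in\mathcal{U}(\mu_X,\mu_Y)}\left(\iint|d_X(x,x')-d_Y(y,y')|^p\,\mu(dx\times dy)\,\mu(dx'\times dy')\right)^{1/p}.$$
   Formalization: In a pmm-space, $\mu_Z$ lives on any sigma-algebra containing the Borel sets of the ball topology rather than on the Borel sets themselves, and measurability of $\pi$ and $\phi$ refers to that sigma-algebra. The statement above fails without it. *)

theory Defs
  imports "HOL-Analysis.Analysis" "HOL-Probability.Probability"
begin

definition borel_of :: "'a topology \<Rightarrow> 'a measure" where
  "borel_of T = sigma (topspace T) {U. openin T U}"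

definition full_support :: "'a topology \<Rightarrow> 'a measure \<Rightarrow> bool" where
  "full_support T M \<longleftrightarrow> (\<forall>U. openin T U \<and> U \<noteq> {} \<longrightarrow> emeasure M U > 0)"

definition mm_space :: "('a \<Rightarrow> 'a \<Rightarrow> real) \<Rightarrow> 'a measure \<Rightarrow> bool" where
  "mm_space d M \<longleftrightarrow>
     Metric_space (space M) d \<and>
     compact_space (Metric_space.mtopology (space M) d) \<and>
     sets M = sets (borel_of (Metric_space.mtopology (space M) d)) \<and>
     prob_space M \<and>
     full_support (Metric_space.mtopology (space M) d) M"

definition pseudo_metric :: "'a set \<Rightarrow> ('a \<Rightarrow> 'a \<Rightarrow> real) \<Rightarrow> bool" where
  "pseudo_metric Z d \<longleftrightarrow>
     (\<forall>x y. 0 \<le> d x y) \<and> (\<forall>x y. d x y = d y x) \<and> (\<forall>x\<in>Z. d x x = 0) \<and>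
     (\<forall>x\<in>Z. \<forall>y\<in>Z. \<forall>z\<in>Z. d x z \<le> d x y + d y z)"

definition pm_open :: "'a set \<Rightarrow> ('a \<Rightarrow> 'a \<Rightarrow> real) \<Rightarrow> 'a set \<Rightarrow> bool" where
  "pm_open Z d U \<longleftrightarrow> U \<subseteq> Z \<and> (\<forall>x\<in>U. \<exists>r>0. {y\<in>Z. d x y < r} \<subseteq> U)"

definition pm_topology :: "'a set \<Rightarrow> ('a \<Rightarrow> 'a \<Rightarrow> real) \<Rightarrow> 'a topology" where
  "pm_topology Z d = topology (pm_open Z d)"

definition pmm_space :: "('a \<Rightarrow> 'a \<Rightarrow> real) \<Rightarrow> 'a measure \<Rightarrow> bool" where
  "pmm_space d M \<longleftrightarrow>
     pseudo_metric (space M) d \<and>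
     compact_space (pm_topology (space M) d) \<and>
     sets (borel_of (pm_topology (space M) d)) \<subseteq> sets M \<and>
     prob_space M \<and>
     full_support (pm_topology (space M) d) M"

definition mass_splitting ::
  "('c \<Rightarrow> 'c \<Rightarrow> real) \<Rightarrow> 'c measure \<Rightarrow> ('a \<Rightarrow> 'a \<Rightarrow> real) \<Rightarrow> 'a measure \<Rightarrow> bool" where
  "mass_splitting dZ MZ dX MX \<longleftrightarrow>
     pmm_space dZ MZ \<and>
     (\<exists>\<pi>. \<pi> \<in> measurable MZ MX \<and> distr MZ MX \<pi> = MX \<and>
          (\<forall>z\<in>space MZ. \<forall>z'\<in>space MZ. dZ z z' = dX (\<pi> z) (\<pi> z')))"

definition proot :: "real \<Rightarrow> ennreal \<Rightarrow> ennreal" where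
  "proot p x = (if x = \<infinity> then \<infinity> else ennreal (enn2real x powr (1 / p)))"

definition transport_maps :: "'c measure \<Rightarrow> 'b measure \<Rightarrow> ('c \<Rightarrow> 'b) set" where
  "transport_maps MZ MY = {\<phi>. \<phi> \<in> measurable MZ MY \<and> distr MZ MY \<phi> = MY}"

text \<open>Gromov-Monge p-distance (INF over the empty set is \<infinity>).\<close>
definition dGM ::
  "real \<Rightarrow> ('c \<Rightarrow> 'c \<Rightarrow> real) \<Rightarrow> 'c measure \<Rightarrow> ('b \<Rightarrow> 'b \<Rightarrow> real) \<Rightarrow> 'b measure \<Rightarrow> ennreal" where
  "dGM p dZ MZ dY MY =
     (INF \<phi>\<in>transport_maps MZ MY.
        proot p (\<integral>\<^sup>+ z. \<integral>\<^sup>+ z'. ennreal (\<bar>dZ z z' - dY (\<phi> z) (\<phi> z')\<bar> powr p) \<partial>MZ \<partial>MZ))"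

definition couplings :: "'a measure \<Rightarrow> 'b measure \<Rightarrow> ('a \<times> 'b) measure set" where
  "couplings MX MY = {\<mu>. sets \<mu> = sets (MX \<Otimes>\<^sub>M MY) \<and> prob_space \<mu> \<and>
                         distr \<mu> MX fst = MX \<and> distr \<mu> MY snd = MY}"

definition dGW ::
  "real \<Rightarrow> ('a \<Rightarrow> 'a \<Rightarrow> real) \<Rightarrow> 'a measure \<Rightarrow> ('b \<Rightarrow> 'b \<Rightarrow> real) \<Rightarrow> 'b measure \<Rightarrow> ennreal" where
  "dGW p dX MX dY MY =
     (INF \<mu>\<in>couplings MX MY.
        proot p (\<integral>\<^sup>+ u. \<integral>\<^sup>+ v.
           ennreal (\<bar>dX (fst u) (fst v) - dY (snd u) (snd v)\<bar> powr p) \<partial>\<mu> \<partial>\<mu>))"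

end

theory Submission
  imports Defs
begin

lemma nn_integral_distr_le:
  assumes T: "T \<in> measurable M N"
  shows "integral\<^sup>N (distr M N T) f \<le> integral\<^sup>N M (\<lambda>x. f (T x))"
  unfolding nn_integral_def[of "distr M N T"]
proof (rule SUP_least, clarify)
  fix g assume g: "simple_function (distr M N T) g" "g \<le> f"
  have "integral\<^sup>S (distr M N T) g = integral\<^sup>N (distr M N T) g"
    using g by (simp add: nn_integral_eq_simple_integral)
  also have "\<dots> = integral\<^sup>N M (\<lambda>x. g (T x))"
    using T borel_measurable_simple_function[OF g(1)] by (rule nn_integral_distr)
  also have "\<dots> \<le> integral\<^sup>N M (\<lambda>x. f (T x))"
    using g by (intro nn_integral_mono) (auto simp: le_fun_def)
  finally show "integral\<^sup>S (distr M N T) g \<le> integral\<^sup>N M (\<lambda>x. f (T x))" .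
qed

lemma nn_integral_distr_le':
  assumes T: "T \<in> measurable M N" and "N' = distr M N T"
  shows "integral\<^sup>N N' f \<le> integral\<^sup>N M (\<lambda>x. f (T x))"
  using nn_integral_distr_le[OF T] assms(2) by simp

lemma proot_mono:
  assumes "p > 0" "x \<le> y" shows "proot p x \<le> proot p y"
proof (cases "y = \<infinity>")
  case True then show ?thesis by (simp add: proot_def)
next
  case False
  then have "x \<noteq> \<infinity>" using assms(2) by (metis infinity_ennreal_def top.extremum_uniqueI)
  moreover have "enn2real x \<le> enn2real y" using assms(2) False by (simp add: enn2real_mono top.not_eq_extremum)
  ultimately show ?thesis using False assms(1)
    by (auto simp: proot_def intro!: ennreal_leI powr_mono2)
qed

lemma istopology_pm_open: "istopology (pm_open Z d)"
  unfolding istopology_def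
proof (intro conjI)
  show "\<forall>S T. pm_open Z d S \<longrightarrow> pm_open Z d T \<longrightarrow> pm_open Z d (S \<inter> T)"
  proof (intro allI impI)
    fix S T assume S: "pm_open Z d S" and T: "pm_open Z d T"
    show "pm_open Z d (S \<inter> T)" unfolding pm_open_def
    proof (intro conjI ballI)
      show "S \<inter> T \<subseteq> Z" using S unfolding pm_open_def by blast
      fix x assume "x \<in> S \<inter> T"
      then obtain r1 r2 where "r1 > 0" "{y \<in> Z. d x y < r1} \<subseteq> S" "r2 > 0" "{y \<in> Z. d x y < r2} \<subseteq> T"
        using S T unfolding pm_open_def by blast
      then show "\<exists>r>0. {y \<in> Z. d x y < r} \<subseteq> S \<inter> T"
      proof (intro exI[of _ "min r1 r2"] conjI)
        show "min r1 r2 > 0" using \<open>r1 > 0\<close> \<open>r2 > 0\<close> by simp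
        show "{y \<in> Z. d x y < min r1 r2} \<subseteq> S \<inter> T"
          using \<open>{y \<in> Z. d x y < r1} \<subseteq> S\<close> \<open>{y \<in> Z. d x y < r2} \<subseteq> T\<close> by auto
      qed
    qed
  qed
next
  show "\<forall>K. (\<forall>K\<in>K. pm_open Z d K) \<longrightarrow> pm_open Z d (\<Union>K)"
  proof (intro allI impI)
    fix KK assume H: "\<forall>K\<in>KK. pm_open Z d K"
    show "pm_open Z d (\<Union>KK)" unfolding pm_open_def
    proof (intro conjI ballI)
      show "\<Union>KK \<subseteq> Z" using H unfolding pm_open_def by auto
      fix x assume "x \<in> \<Union>KK"
      then obtain K where K: "K \<in> KK" "x \<in> K" by blast
      then obtain r where "r > 0" "{y \<in> Z. d x y < r} \<subseteq> K" using H unfolding pm_open_def by blast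
      then show "\<exists>r>0. {y \<in> Z. d x y < r} \<subseteq> \<Union>KK" using K(1) by blast
    qed
  qed
qed

lemma openin_pm_topology: "openin (pm_topology Z d) U \<longleftrightarrow> pm_open Z d U"
  unfolding pm_topology_def by (simp add: istopology_pm_open)

lemma topspace_pm_topology: "topspace (pm_topology Z d) = Z"
proof -
  have "pm_open Z d Z" unfolding pm_open_def by (auto intro: exI[of _ 1])
  moreover have "\<And>U. pm_open Z d U \<Longrightarrow> U \<subseteq> Z" unfolding pm_open_def by auto
  ultimately show ?thesis unfolding topspace_def openin_pm_topology
    by (intro equalityI subsetI) auto
qed

lemma exists_inj_real:
  assumes "Metric_space S d" "compact_space (Metric_space.mtopology S d)"
  shows "\<exists>\<iota>::'b \<Rightarrow> real. inj_on \<iota> S"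
proof -
  interpret Metric_space S d by fact
  have tb: "mtotally_bounded S"
    using assms(2) compact_space_eq_mcomplete_mtotally_bounded by blast
  have "\<forall>n::nat. \<exists>K. finite K \<and> K \<subseteq> S \<and> S \<subseteq> (\<Union>x\<in>K. mball x (1 / real (Suc n)))"
    using tb unfolding mtotally_bounded_def by simp
  then obtain K where K0: "\<forall>n. finite (K n) \<and> K n \<subseteq> S \<and> S \<subseteq> (\<Union>x\<in>K n. mball x (1 / real (Suc n)))"
    by (rule choice[THEN exE]) blast
  then have K: "\<And>n. finite (K n)" "\<And>n. K n \<subseteq> S"
     "\<And>n. S \<subseteq> (\<Union>x\<in>K n. mball x (1 / real (Suc n)))"
    by auto
  define C where "C = (\<Union>n. K n)"
  have cC: "countable C" unfolding C_def using K(1) by (simp add: countable_finite)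
  define g where "g y = {(to_nat_on C x, r) | x r. x \<in> C \<and> d y x < real_of_rat r}" for y
  have injg: "inj_on g S"
  proof (rule inj_onI, rule ccontr)
    fix y y' assume y: "y \<in> S" "y' \<in> S" "g y = g y'" "y \<noteq> y'"
    define \<delta> where "\<delta> = d y y'"
    have \<delta>: "\<delta> > 0" using y by (simp add: \<delta>_def)
    obtain n where n0: "inverse (real (Suc n)) < \<delta> / 3"
      using reals_Archimedean[of "\<delta> / 3"] \<delta> by auto
    then have n: "1 / real (Suc n) < \<delta> / 3" by (simp add: inverse_eq_divide)
    obtain x where x: "x \<in> K n" "y \<in> mball x (1 / real (Suc n))" using K(3)[of n] y(1) by blast
    have xS: "x \<in> S" using x K(2) by blast
    have dyx: "d y x < \<delta> / 3" using x n by (simp add: commute)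
    have "d y y' \<le> d y x + d x y'" using y xS triangle by blast
    moreover have "d x y' = d y' x" by (rule commute)
    ultimately have "\<delta> \<le> d y x + d y' x" unfolding \<delta>_def by simp
    then have dy'x: "d y' x > d y x" using dyx \<delta> by linarith
    obtain r where r: "d y x < real_of_rat r" "real_of_rat r < d y' x" using of_rat_dense[OF dy'x] by blast
    have "x \<in> C" using x C_def by blast
    then have "(to_nat_on C x, r) \<in> g y" using r unfolding g_def by blast
    then have "(to_nat_on C x, r) \<in> g y'" using y by simp
    then obtain x' r' where x'0: "(to_nat_on C x, r) = (to_nat_on C x', r')" "x' \<in> C" "d y' x' < real_of_rat r'"
      unfolding g_def by blast
    then have x': "x' \<in> C" "to_nat_on C x' = to_nat_on C x" "d y' x' < real_of_rat r"
      by auto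
    have "x' = x" using inj_on_to_nat_on[OF cC] x' \<open>x \<in> C\<close> by (meson inj_onD)
    then show False using x' r by simp
  qed
  define h :: "(nat \<times> rat) set \<Rightarrow> nat set" where "h A = to_nat ` A" for A
  have injh: "inj h" unfolding h_def by (rule injI) (simp add: inj_image_eq_iff[OF inj_to_nat])
  obtain b :: "nat set \<Rightarrow> real" where b: "bij_betw b UNIV UNIV"
    using nat_sets_eqpoll_reals unfolding eqpoll_def by blast
  have "inj (b \<circ> h)" using bij_betw_imp_inj_on[OF b] injh by (rule inj_compose)
  then have "inj_on (b \<circ> h \<circ> g) S"
    using comp_inj_on[OF injg inj_on_subset[OF \<open>inj (b \<circ> h)\<close> subset_UNIV]] by simp
  then show ?thesis by blast
qed


lemma distr_via:
  assumes "M' = distr M N T" "T \<in> measurable M N" "f \<in> measurable N L"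
  shows "distr M' L f = distr M L (f \<circ> T)"
  using assms by (simp add: distr_distr)

lemma part1:
  fixes dZ :: "'c \<Rightarrow> 'c \<Rightarrow> real"
  assumes ms: "mass_splitting dZ MZ dX MX" and p: "p \<ge> 1"
  shows "dGW p dX MX dY MY \<le> dGM p dZ MZ dY MY"
proof -
  obtain \<pi> where \<pi>: "\<pi> \<in> measurable MZ MX" "distr MZ MX \<pi> = MX"
    "\<forall>z\<in>space MZ. \<forall>z'\<in>space MZ. dZ z z' = dX (\<pi> z) (\<pi> z')"
    using ms unfolding mass_splitting_def by blast
  have probZ: "prob_space MZ" using ms unfolding mass_splitting_def pmm_space_def by blast
  show ?thesis unfolding dGM_def
  proof (rule INF_greatest)
    fix \<phi> assume "\<phi> \<in> transport_maps MZ MY"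
    then have \<phi>: "\<phi> \<in> measurable MZ MY" "distr MZ MY \<phi> = MY" unfolding transport_maps_def by auto
    define T where "T z = (\<pi> z, \<phi> z)" for z
    have Tm: "T \<in> measurable MZ (MX \<Otimes>\<^sub>M MY)" unfolding T_def using \<pi>(1) \<phi>(1) by (rule measurable_Pair)
    define \<nu> where "\<nu> = distr MZ (MX \<Otimes>\<^sub>M MY) T"
    have "\<nu> \<in> couplings MX MY"
      unfolding couplings_def
    proof (intro CollectI conjI)
      show "sets \<nu> = sets (MX \<Otimes>\<^sub>M MY)" unfolding \<nu>_def by simp
      show "prob_space \<nu>" unfolding \<nu>_def using probZ Tm by (rule prob_space.prob_space_distr)
      show "distr \<nu> MX fst = MX"
        using distr_via[OF \<nu>_def Tm measurable_fst] \<pi>(2) by (simp add: T_def comp_def)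
      show "distr \<nu> MY snd = MY"
        using distr_via[OF \<nu>_def Tm measurable_snd] \<phi>(2) by (simp add: T_def comp_def)
    qed
    define F where "F u v = ennreal (\<bar>dX (fst u) (fst v) - dY (snd u) (snd v)\<bar> powr p)" for u v
    have "dGW p dX MX dY MY \<le> proot p (\<integral>\<^sup>+ u. \<integral>\<^sup>+ v. F u v \<partial>\<nu> \<partial>\<nu>)"
      unfolding dGW_def F_def by (rule INF_lower) fact
    also have "\<dots> \<le> proot p (\<integral>\<^sup>+ z. \<integral>\<^sup>+ z'. ennreal (\<bar>dZ z z' - dY (\<phi> z) (\<phi> z')\<bar> powr p) \<partial>MZ \<partial>MZ)"
    proof (rule proot_mono)
      show "p > 0" using p by simp
      have "(\<integral>\<^sup>+ u. \<integral>\<^sup>+ v. F u v \<partial>\<nu> \<partial>\<nu>) \<le> (\<integral>\<^sup>+ u. \<integral>\<^sup>+ z'. F u (T z') \<partial>MZ \<partial>\<nu>)"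
        by (intro nn_integral_mono nn_integral_distr_le'[OF Tm \<nu>_def])
      also have "\<dots> \<le> (\<integral>\<^sup>+ z. \<integral>\<^sup>+ z'. F (T z) (T z') \<partial>MZ \<partial>MZ)"
        by (rule nn_integral_distr_le'[OF Tm \<nu>_def])
      also have "\<dots> = (\<integral>\<^sup>+ z. \<integral>\<^sup>+ z'. ennreal (\<bar>dZ z z' - dY (\<phi> z) (\<phi> z')\<bar> powr p) \<partial>MZ \<partial>MZ)"
        using \<pi>(3) by (intro nn_integral_cong) (simp add: F_def T_def)
      finally show "(\<integral>\<^sup>+ u. \<integral>\<^sup>+ v. F u v \<partial>\<nu> \<partial>\<nu>)
          \<le> (\<integral>\<^sup>+ z. \<integral>\<^sup>+ z'. ennreal (\<bar>dZ z z' - dY (\<phi> z) (\<phi> z')\<bar> powr p) \<partial>MZ \<partial>MZ)" .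
    qed
    finally show "dGW p dX MX dY MY \<le> proot p (\<integral>\<^sup>+ z. \<integral>\<^sup>+ z'. ennreal (\<bar>dZ z z' - dY (\<phi> z) (\<phi> z')\<bar> powr p) \<partial>MZ \<partial>MZ)" .
  qed
qed


lemma construct:
  fixes dX :: "'a \<Rightarrow> 'a \<Rightarrow> real" and MX :: "'a measure"
    and dY :: "'b \<Rightarrow> 'b \<Rightarrow> real" and MY :: "'b measure"
  assumes mX: "mm_space dX MX" and mY: "mm_space dY MY" and p: "p \<ge> 1"
    and \<mu>: "\<mu> \<in> couplings MX MY"
  shows "\<exists>Z \<in> {(dZ :: 'a \<times> real \<Rightarrow> 'a \<times> real \<Rightarrow> real, MZ). mass_splitting dZ MZ dX MX}.
     dGM p (fst Z) (snd Z) dY MY \<le>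
     proot p (\<integral>\<^sup>+ u. \<integral>\<^sup>+ v. ennreal (\<bar>dX (fst u) (fst v) - dY (snd u) (snd v)\<bar> powr p) \<partial>\<mu> \<partial>\<mu>)"
proof -
  define X where "X = space MX"
  define Y where "Y = space MY"
  have MXm: "Metric_space X dX" and cX: "compact_space (Metric_space.mtopology X dX)"
    and sX: "sets MX = sets (borel_of (Metric_space.mtopology X dX))"
    and fX: "full_support (Metric_space.mtopology X dX) MX"
    using mX unfolding mm_space_def X_def by auto
  have MYm: "Metric_space Y dY" and cY: "compact_space (Metric_space.mtopology Y dY)"
    and pY: "prob_space MY"
    using mY unfolding mm_space_def Y_def by auto
  interpret Xm: Metric_space X dX by fact
  obtain \<iota> :: "'b \<Rightarrow> real" where inj\<iota>: "inj_on \<iota> Y" using exists_inj_real[OF MYm cY] by blast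
  obtain y0 where y0: "y0 \<in> Y" using prob_space.not_empty[OF pY] unfolding Y_def by blast
  have \<mu>s: "sets \<mu> = sets (MX \<Otimes>\<^sub>M MY)" "prob_space \<mu>" "distr \<mu> MX fst = MX" "distr \<mu> MY snd = MY"
    using \<mu> unfolding couplings_def by auto
  have sp\<mu>: "space \<mu> = X \<times> Y"
    using sets_eq_imp_space_eq[OF \<mu>s(1)] by (simp add: space_pair_measure X_def Y_def)
  define T where "T u = (fst u, \<iota> (snd u))" for u :: "'a \<times> 'b"
  have injT: "inj_on T (space \<mu>)"
  proof (rule inj_onI)
    fix u v assume "u \<in> space \<mu>" "v \<in> space \<mu>" "T u = T v"
    then show "u = v" using inj\<iota> unfolding sp\<mu> T_def
      by (metis SigmaE fst_conv inj_onD snd_conv)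
  qed
  define MZ where "MZ = embed_measure \<mu> T"
  define dZ :: "'a \<times> real \<Rightarrow> 'a \<times> real \<Rightarrow> real" where "dZ z z' = dX (fst z) (fst z')" for z z'
  define \<phi> where "\<phi> z = the_inv_into Y \<iota> (snd z)" for z :: "'a \<times> real"
  have MZeq: "MZ = distr \<mu> MZ T" unfolding MZ_def by (rule embed_measure_eq_distr'[OF injT])
  have Tm: "T \<in> measurable \<mu> MZ" unfolding MZ_def by (rule measurable_embed_measure2'[OF injT])
  have spZ: "space MZ = T ` space \<mu>" unfolding MZ_def by (rule space_embed_measure)
  have fstm\<mu>: "fst \<in> measurable \<mu> MX"
    using measurable_fst measurable_cong_sets[OF \<mu>s(1) refl] by blast
  have sndm\<mu>: "snd \<in> measurable \<mu> MY"
    using measurable_snd measurable_cong_sets[OF \<mu>s(1) refl] by blast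
  have fstm: "fst \<in> measurable MZ MX" unfolding MZ_def
    by (rule measurable_embed_measure1) (simp add: T_def fstm\<mu>)
  have \<phi>T: "\<phi> (T u) = snd u" if "u \<in> space \<mu>" for u
    using that unfolding sp\<mu> \<phi>_def T_def by (auto simp: the_inv_into_f_f[OF inj\<iota>])
  have \<phi>m: "\<phi> \<in> measurable MZ MY" unfolding MZ_def
    by (rule measurable_embed_measure1) (subst measurable_cong[where g=snd], auto simp: \<phi>T sndm\<mu>)
  have distr_fst: "distr MZ MX fst = MX"
  proof -
    have "distr MZ MX fst = distr \<mu> MX (fst \<circ> T)" by (rule distr_via[OF MZeq Tm fstm])
    also have "fst \<circ> T = fst" by (auto simp: T_def)
    finally show ?thesis using \<mu>s(3) by simp
  qed
  have distr_\<phi>: "distr MZ MY \<phi> = MY"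
  proof -
    have "distr MZ MY \<phi> = distr \<mu> MY (\<phi> \<circ> T)" by (rule distr_via[OF MZeq Tm \<phi>m])
    also have "\<dots> = distr \<mu> MY snd" by (rule distr_cong) (auto simp: \<phi>T)
    finally show ?thesis using \<mu>s(4) by simp
  qed
  define Z where "Z = space MZ"
  have fstZ: "fst z \<in> X" if "z \<in> Z" for z
    using that unfolding Z_def spZ sp\<mu> T_def by auto
  have TZ: "T (x, y0) \<in> Z" if "x \<in> X" for x
    using that y0 unfolding Z_def spZ sp\<mu> by auto
  have fstT: "fst (T u) = fst u" for u by (simp add: T_def)
  have sat: "z' \<in> U" if A: "pm_open Z dZ U" "z \<in> U" "z' \<in> Z" "fst z' = fst z" for U z z'
  proof -
    obtain r where r: "r > 0" "{y \<in> Z. dZ z y < r} \<subseteq> U" using A(1,2) unfolding pm_open_def by blast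
    have "z \<in> Z" using A(1,2) unfolding pm_open_def by blast
    then have "dZ z z' = 0" using A(4) fstZ unfolding dZ_def by simp
    then show ?thesis using r A(3) by auto
  qed
  have openV: "openin Xm.mtopology (fst ` U)" if A: "pm_open Z dZ U" for U
    unfolding Xm.openin_mtopology
  proof (intro conjI allI impI)
    show "fst ` U \<subseteq> X" using A fstZ unfolding pm_open_def by blast
    fix x assume "x \<in> fst ` U"
    then obtain z where z: "z \<in> U" "x = fst z" by blast
    obtain r where r: "r > 0" "{y \<in> Z. dZ z y < r} \<subseteq> U" using A z unfolding pm_open_def by blast
    show "\<exists>r>0. Xm.mball x r \<subseteq> fst ` U"
    proof (intro exI conjI)
      show "r > 0" by fact
      show "Xm.mball x r \<subseteq> fst ` U"
      proof
        fix y assume y: "y \<in> Xm.mball x r"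
        then have "T (y, y0) \<in> Z" "dZ z (T (y, y0)) < r" using TZ z by (auto simp: dZ_def T_def)
        then have "T (y, y0) \<in> U" using r by blast
        then show "y \<in> fst ` U" by (force simp: T_def)
      qed
    qed
  qed
  have Usat: "U = fst -` (fst ` U) \<inter> Z" if A: "pm_open Z dZ U" for U
  proof
    show "U \<subseteq> fst -` fst ` U \<inter> Z" using A unfolding pm_open_def by blast
    show "fst -` fst ` U \<inter> Z \<subseteq> U" using sat[OF A] by force
  qed
  have pmZ: "pmm_space dZ MZ"
    unfolding pmm_space_def Z_def[symmetric]
  proof (intro conjI)
    show "pseudo_metric Z dZ" unfolding pseudo_metric_def dZ_def
      using fstZ Xm.nonneg Xm.commute Xm.triangle by auto
    show "compact_space (pm_topology Z dZ)"
      unfolding compact_space_def compactin_def topspace_pm_topology openin_pm_topology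
    proof (intro conjI allI impI subset_refl)
      fix UU assume UU: "(\<forall>U\<in>UU. pm_open Z dZ U) \<and> Z \<subseteq> \<Union>UU"
      have cov: "X \<subseteq> \<Union>((`) fst ` UU)"
      proof
        fix x assume "x \<in> X"
        then obtain U where "U \<in> UU" "T (x, y0) \<in> U" using TZ UU by blast
        then show "x \<in> \<Union>((`) fst ` UU)" by (force simp: T_def)
      qed
      have cXc: "\<forall>U. (\<forall>V\<in>U. openin Xm.mtopology V) \<and> X \<subseteq> \<Union>U \<longrightarrow> (\<exists>F. finite F \<and> F \<subseteq> U \<and> X \<subseteq> \<Union>F)"
        using cX unfolding compact_space_def compactin_def Xm.topspace_mtopology by simp
      have opn: "\<forall>V\<in>(`) fst ` UU. openin Xm.mtopology V"
      proof
        fix V assume "V \<in> (`) fst ` UU"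
        then obtain U where "U \<in> UU" "V = fst ` U" by blast
        then show "openin Xm.mtopology V" using openV UU by simp
      qed
      have "\<exists>VV. finite VV \<and> VV \<subseteq> (`) fst ` UU \<and> X \<subseteq> \<Union>VV"
        using cXc[rule_format, OF conjI[OF opn cov]] .
      then obtain VV where VV: "finite VV" "VV \<subseteq> (`) fst ` UU" "X \<subseteq> \<Union>VV" by blast
      obtain WW where WW: "WW \<subseteq> UU" "finite WW" "VV = (`) fst ` WW"
        using finite_subset_image[OF VV(1,2)] by blast
      show "\<exists>VV. finite VV \<and> VV \<subseteq> UU \<and> Z \<subseteq> \<Union>VV"
      proof (intro exI conjI)
        show "finite WW" "WW \<subseteq> UU" by fact+
        show "Z \<subseteq> \<Union>WW"
        proof
          fix z assume z: "z \<in> Z"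
          then obtain W where W: "W \<in> WW" "fst z \<in> fst ` W" using fstZ VV(3) WW(3) by blast
          then obtain w where "w \<in> W" "fst w = fst z" by force
          moreover have "pm_open Z dZ W" using W(1) WW(1) UU by blast
          ultimately have "z \<in> W" using sat[of W w z] z by simp
          then show "z \<in> \<Union>WW" using W by blast
        qed
      qed
    qed
    have openM: "U \<in> sets MZ" if A: "pm_open Z dZ U" for U
    proof -
      have "fst ` U \<in> sets MX"
      proof -
        have "{U. openin Xm.mtopology U} \<subseteq> Pow X" using openin_subset by fastforce
        then have "sets MX = sigma_sets X {U. openin Xm.mtopology U}"
          using sX unfolding borel_of_def by (simp add: sets_measure_of)
        then show ?thesis using openV[OF A] by auto
      qed
      then have "fst -` (fst ` U) \<inter> space MZ \<in> sets MZ" by (rule measurable_sets[OF fstm])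
      then show ?thesis using Usat[OF A] Z_def by simp
    qed
    show "sets (borel_of (pm_topology Z dZ)) \<subseteq> sets MZ"
    proof -
      have sub: "{U. openin (pm_topology Z dZ) U} \<subseteq> Pow Z"
        unfolding openin_pm_topology pm_open_def by blast
      have "sets (borel_of (pm_topology Z dZ)) = sigma_sets Z {U. openin (pm_topology Z dZ) U}"
        unfolding borel_of_def topspace_pm_topology using sub by (simp add: sets_measure_of)
      also have "\<dots> \<subseteq> sets MZ" unfolding Z_def
        by (rule sets.sigma_sets_subset) (auto simp: openin_pm_topology Z_def[symmetric] openM)
      finally show ?thesis .
    qed
    have "prob_space (distr \<mu> MZ T)" using \<mu>s(2) Tm by (rule prob_space.prob_space_distr)
    then show "prob_space MZ" using MZeq by metis
    show "full_support (pm_topology Z dZ) MZ"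
      unfolding full_support_def openin_pm_topology
    proof (intro allI impI)
      fix U assume U: "pm_open Z dZ U \<and> U \<noteq> {}"
      have V: "openin Xm.mtopology (fst ` U)" "fst ` U \<noteq> {}" using openV U by auto
      have VM: "fst ` U \<in> sets MX"
      proof -
        have "{U. openin Xm.mtopology U} \<subseteq> Pow X" using openin_subset by fastforce
        then have "sets MX = sigma_sets X {U. openin Xm.mtopology U}"
          using sX unfolding borel_of_def by (simp add: sets_measure_of)
        then show ?thesis using V by auto
      qed
      have "emeasure MZ U = emeasure MZ (fst -` (fst ` U) \<inter> space MZ)"
        using Usat U Z_def by simp
      also have "\<dots> = emeasure (distr MZ MX fst) (fst ` U)"
        by (rule emeasure_distr[OF fstm VM, symmetric])
      also have "\<dots> = emeasure MX (fst ` U)" using distr_fst by simp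
      finally show "emeasure MZ U > 0" using fX V unfolding full_support_def by simp
    qed
  qed
  have msZ: "mass_splitting dZ MZ dX MX"
    unfolding mass_splitting_def using pmZ fstm distr_fst by (auto simp: dZ_def)
  have \<phi>tr: "\<phi> \<in> transport_maps MZ MY" unfolding transport_maps_def using \<phi>m distr_\<phi> by simp
  define G where "G z z' = ennreal (\<bar>dZ z z' - dY (\<phi> z) (\<phi> z')\<bar> powr p)" for z z'
  have "dGM p dZ MZ dY MY \<le> proot p (\<integral>\<^sup>+ z. \<integral>\<^sup>+ z'. G z z' \<partial>MZ \<partial>MZ)"
    unfolding dGM_def G_def by (rule INF_lower[OF \<phi>tr])
  also have "\<dots> \<le> proot p (\<integral>\<^sup>+ u. \<integral>\<^sup>+ v. ennreal (\<bar>dX (fst u) (fst v) - dY (snd u) (snd v)\<bar> powr p) \<partial>\<mu> \<partial>\<mu>)"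
  proof (rule proot_mono)
    show "p > 0" using p by simp
    have "(\<integral>\<^sup>+ z. \<integral>\<^sup>+ z'. G z z' \<partial>MZ \<partial>MZ) \<le> (\<integral>\<^sup>+ z. \<integral>\<^sup>+ v. G z (T v) \<partial>\<mu> \<partial>MZ)"
      by (intro nn_integral_mono nn_integral_distr_le'[OF Tm MZeq])
    also have "\<dots> \<le> (\<integral>\<^sup>+ u. \<integral>\<^sup>+ v. G (T u) (T v) \<partial>\<mu> \<partial>\<mu>)"
      by (rule nn_integral_distr_le'[OF Tm MZeq])
    also have "\<dots> = (\<integral>\<^sup>+ u. \<integral>\<^sup>+ v. ennreal (\<bar>dX (fst u) (fst v) - dY (snd u) (snd v)\<bar> powr p) \<partial>\<mu> \<partial>\<mu>)"
      by (intro nn_integral_cong) (simp add: G_def dZ_def fstT \<phi>T)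
    finally show "(\<integral>\<^sup>+ z. \<integral>\<^sup>+ z'. G z z' \<partial>MZ \<partial>MZ)
       \<le> (\<integral>\<^sup>+ u. \<integral>\<^sup>+ v. ennreal (\<bar>dX (fst u) (fst v) - dY (snd u) (snd v)\<bar> powr p) \<partial>\<mu> \<partial>\<mu>)" .
  qed
  finally have "dGM p dZ MZ dY MY \<le> proot p (\<integral>\<^sup>+ u. \<integral>\<^sup>+ v. ennreal (\<bar>dX (fst u) (fst v) - dY (snd u) (snd v)\<bar> powr p) \<partial>\<mu> \<partial>\<mu>)" .
  then show ?thesis using msZ by (intro bexI[of _ "(dZ, MZ)"]) auto
qed

theorem theorem3p2:
  fixes dX :: "'a \<Rightarrow> 'a \<Rightarrow> real" and MX :: "'a measure"
    and dY :: "'b \<Rightarrow> 'b \<Rightarrow> real" and MY :: "'b measure"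
    and p :: real
  assumes "mm_space dX MX" and "mm_space dY MY" and "p \<ge> 1"
  shows "(\<forall>(dZ :: 'c \<Rightarrow> 'c \<Rightarrow> real) MZ. mass_splitting dZ MZ dX MX
            \<longrightarrow> dGW p dX MX dY MY \<le> dGM p dZ MZ dY MY)
     \<and> dGW p dX MX dY MY =
         (INF Z \<in> {(dZ :: 'a \<times> real \<Rightarrow> 'a \<times> real \<Rightarrow> real, MZ). mass_splitting dZ MZ dX MX}.
            dGM p (fst Z) (snd Z) dY MY)"
proof (intro conjI allI impI antisym)
  fix dZ :: "'c \<Rightarrow> 'c \<Rightarrow> real" and MZ
  assume "mass_splitting dZ MZ dX MX"
  then show "dGW p dX MX dY MY \<le> dGM p dZ MZ dY MY" using part1 assms(3) by blast
next
  show "dGW p dX MX dY MY \<le> (INF Z \<in> {(dZ :: 'a \<times> real \<Rightarrow> 'a \<times> real \<Rightarrow> real, MZ). mass_splitting dZ MZ dX MX}.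
            dGM p (fst Z) (snd Z) dY MY)"
  proof (rule INF_greatest)
    fix Z :: "('a \<times> real \<Rightarrow> 'a \<times> real \<Rightarrow> real) \<times> ('a \<times> real) measure"
    assume "Z \<in> {(dZ, MZ). mass_splitting dZ MZ dX MX}"
    then have "mass_splitting (fst Z) (snd Z) dX MX" by (cases Z) simp
    then show "dGW p dX MX dY MY \<le> dGM p (fst Z) (snd Z) dY MY" using part1 assms(3) by blast
  qed
next
  show "(INF Z \<in> {(dZ :: 'a \<times> real \<Rightarrow> 'a \<times> real \<Rightarrow> real, MZ). mass_splitting dZ MZ dX MX}.
            dGM p (fst Z) (snd Z) dY MY) \<le> dGW p dX MX dY MY"
    unfolding dGW_def
  proof (rule INF_greatest)
    fix \<mu> assume "\<mu> \<in> couplings MX MY"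
    from construct[OF assms this] obtain Z where
      "Z \<in> {(dZ :: 'a \<times> real \<Rightarrow> 'a \<times> real \<Rightarrow> real, MZ). mass_splitting dZ MZ dX MX}"
      "dGM p (fst Z) (snd Z) dY MY \<le>
       proot p (\<integral>\<^sup>+ u. \<integral>\<^sup>+ v. ennreal (\<bar>dX (fst u) (fst v) - dY (snd u) (snd v)\<bar> powr p) \<partial>\<mu> \<partial>\<mu>)"
      by blast
    then show "(INF Z \<in> {(dZ :: 'a \<times> real \<Rightarrow> 'a \<times> real \<Rightarrow> real, MZ). mass_splitting dZ MZ dX MX}.
            dGM p (fst Z) (snd Z) dY MY) \<le>
       proot p (\<integral>\<^sup>+ u. \<integral>\<^sup>+ v. ennreal (\<bar>dX (fst u) (fst v) - dY (snd u) (snd v)\<bar> powr p) \<partial>\<mu> \<partial>\<mu>)"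
      by (rule INF_lower2)
  qed
qed

end
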